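(* Let $q\in\mathbb{N}_+$, let $p\ge 7$ be prime, $n\ge 2$, and let $\sigma\in\{2,3\}^{n-1}$ satisfy $\sum_{i=1}^{n-1}\sigma_i^q = p^q-1$ and $\|k\sigma\bmod p\|_q>\|\sigma\bmod p\|_q$ for every integer $k\not\equiv 0,\pm1\pmod p$; if $q\ge2$ assume moreover $4n-3>2p$. Let $\vec u=(1,\sigma)$, $W_i=p\vec e_i\in\mathbb{R}^n$, $\mathcal{L}_+=\operatorname{span}_{\mathbb{Z}}(W_1,\dots,W_n,\vec u)$, and let $R>p$ be a real number with $\mathcal{L}_+\cap\mathcal{B}_q(R) = \{\vec 0,\pm W_1,\dots,\pm W_n,\pm\vec u\}$. Let $\varepsilon>0$ satisfy $\varepsilon<\frac{R-p}{2}$ and $\varepsilon^q < \frac{p^q(R^q-p^q)}{((n-1)(p-1)+1)^q}$. Define in $\mathbb{R}^{n+1}$: $$\vec v_1=(W_1,\varepsilon),\quad \vec v_i=(W_i,2\varepsilon)\ (2\le i\le n),\quad \tilde{\vec u} = \tfrac1p\sum_{i=1}^n u_i\vec v_i = \Big(\vec u,\ \tfrac{2\sum_{i=1}^{n-1}\sigma_i+1}{p}\varepsilon\Big),$$ let $\tilde{\mathcal{L}}=\operatorname{span}_{\mathbb{Z}}(\vec v_1,\dots,\vec v_n,\tilde{\vec u})$ and $\mathcal{S}=\{\vec 0,\pm\vec v_1,\dots,\pm\vec v_n,\pm\tilde{\vec u}\}$. Then $\tilde{\mathcal{L}}$ is a lattice of rank $n$, $\tilde{\mathcal{L}}\cap\mathcal{B}_q(R)=\mathcal{S}$,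 and $\pm\vec v_1$ are the only shortest nonzero vectors of $\tilde{\mathcal{L}}$ (in $\ell^q$-norm).
   Context: $\|\vec x\|_q=(\sum_i|x_i|^q)^{1/q}$, $\mathcal{B}_q(r)=\{\vec x:\|\vec x\|_q<r\}$ (in the appropriate dimension). For real $\alpha$, $|\alpha|_p=\min_{z\in\mathbb{Z}}|\alpha-zp|$ and $\|\vec x\bmod p\|_q=(\sum_i|x_i|_p^q)^{1/q}$. $\vec e_i$ is the $i$-th standard unit vector; $(W_i,\varepsilon)$ denotes the vector of $\mathbb{R}^{n+1}$ obtained by appending the coordinate $\varepsilon$ to $W_i$. Such an $R$ exists since $\mathcal{L}_+$ is discrete and its nonzero vectors of norm $\le p$ are exactly $\pm W_i,\pm\vec u$. *)

theory Defs
  imports Complex_Main "HOL-Number_Theory.Cong"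
begin

text \<open>Vectors of R^d are represented as functions nat => real, with coordinates
  indexed 1..d (as in the paper) and all other coordinates equal to 0.\<close>

definition qnorm :: "nat \<Rightarrow> nat \<Rightarrow> (nat \<Rightarrow> real) \<Rightarrow> real" where
  "qnorm q d x = root q (\<Sum>i=1..d. \<bar>x i\<bar> ^ q)"

definition qball :: "nat \<Rightarrow> nat \<Rightarrow> real \<Rightarrow> (nat \<Rightarrow> real) set" where
  "qball q d r = {x. (\<forall>j. j \<notin> {1..d} \<longrightarrow> x j = 0) \<and> qnorm q d x < r}"

definition absmod :: "real \<Rightarrow> real \<Rightarrow> real" where
  "absmod p a = Inf {\<bar>a - of_int z * p\<bar> | z. True}"

definition modnorm :: "nat \<Rightarrow> real \<Rightarrow> nat \<Rightarrow> (nat \<Rightarrow> real) \<Rightarrow> real" where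
  "modnorm q p d x = root q (\<Sum>i=1..d. (absmod p (x i)) ^ q)"

definition zspan :: "nat set \<Rightarrow> (nat \<Rightarrow> nat \<Rightarrow> real) \<Rightarrow> (nat \<Rightarrow> real) set" where
  "zspan I g = {x. \<exists>c::nat \<Rightarrow> int. x = (\<lambda>j. \<Sum>i\<in>I. of_int (c i) * g i j)}"

definition lattice_of_rank :: "nat \<Rightarrow> nat \<Rightarrow> (nat \<Rightarrow> real) set \<Rightarrow> bool" where
  "lattice_of_rank d k L \<longleftrightarrow>
     (\<exists>b::nat \<Rightarrow> nat \<Rightarrow> real.
        (\<forall>i\<in>{1..k}. \<forall>j. j \<notin> {1..d} \<longrightarrow> b i j = 0) \<and>
        (\<forall>c::nat \<Rightarrow> real. (\<forall>j. (\<Sum>i=1..k. c i * b i j) = 0) \<longrightarrow> (\<forall>i\<in>{1..k}. c i = 0)) \<and>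
        L = zspan {1..k} b)"

definition Wvec :: "nat \<Rightarrow> nat \<Rightarrow> nat \<Rightarrow> real" where
  "Wvec p i = (\<lambda>j. if j = i then real p else 0)"

definition uvec :: "nat \<Rightarrow> (nat \<Rightarrow> int) \<Rightarrow> nat \<Rightarrow> real" where
  "uvec n \<sigma> = (\<lambda>j. if j = 1 then 1 else if 2 \<le> j \<and> j \<le> n then of_int (\<sigma> (j - 1)) else 0)"

definition Lplus :: "nat \<Rightarrow> nat \<Rightarrow> (nat \<Rightarrow> int) \<Rightarrow> (nat \<Rightarrow> real) set" where
  "Lplus p n \<sigma> = zspan {1..n+1} (\<lambda>i. if i \<le> n then Wvec p i else uvec n \<sigma>)"

definition vvec :: "nat \<Rightarrow> nat \<Rightarrow> real \<Rightarrow> nat \<Rightarrow> nat \<Rightarrow> real" where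
  "vvec p n \<epsilon> i = (\<lambda>j. if j = i then real p
                         else if j = n + 1 then (if i = 1 then \<epsilon> else 2 * \<epsilon>) else 0)"

definition utilde :: "nat \<Rightarrow> nat \<Rightarrow> (nat \<Rightarrow> int) \<Rightarrow> real \<Rightarrow> nat \<Rightarrow> real" where
  "utilde p n \<sigma> \<epsilon> = (\<lambda>j. (1 / real p) * (\<Sum>i=1..n. uvec n \<sigma> i * vvec p n \<epsilon> i j))"

definition Ltilde :: "nat \<Rightarrow> nat \<Rightarrow> (nat \<Rightarrow> int) \<Rightarrow> real \<Rightarrow> (nat \<Rightarrow> real) set" where
  "Ltilde p n \<sigma> \<epsilon> = zspan {1..n+1} (\<lambda>i. if i \<le> n then vvec p n \<epsilon> i else utilde p n \<sigma> \<epsilon>)"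

end

theory Submission
  imports Defs
begin

definition wt :: "nat \<Rightarrow> real" where "wt k = (if k = 1 then 1 else 2)"
definition ell :: "nat \<Rightarrow> (nat \<Rightarrow> real) \<Rightarrow> real" where "ell n y = (\<Sum>k=1..n. y k * wt k)"
definition lft :: "nat \<Rightarrow> nat \<Rightarrow> real \<Rightarrow> (nat \<Rightarrow> real) \<Rightarrow> nat \<Rightarrow> real" where
 "lft p n e y = (\<lambda>j. if j = n+1 then e / real p * ell n y else y j)"
definition Np :: "nat \<Rightarrow> nat \<Rightarrow> (nat \<Rightarrow> real) \<Rightarrow> real" where
 "Np q d x = (\<Sum>i=1..d. \<bar>x i\<bar> ^ q)"

lemma ell_sum: "finite I \<Longrightarrow> ell n (\<lambda>j. \<Sum>i\<in>I. a i * h i j) = (\<Sum>i\<in>I. a i * ell n (h i))"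
  unfolding ell_def
  by (simp add: sum_distrib_left sum_distrib_right mult.assoc sum.swap[of _ I])

lemma lft_sum: "finite I \<Longrightarrow> lft p n e (\<lambda>j. \<Sum>i\<in>I. a i * h i j) = (\<lambda>j. \<Sum>i\<in>I. a i * lft p n e (h i) j)"
  unfolding lft_def
  by (auto simp: ell_sum sum_distrib_left mult.left_commute)

lemma ell_neg: "ell n (\<lambda>j. - y j) = - ell n y"
  unfolding ell_def by (simp add: sum_negf)

lemma lft_neg: "lft p n e (\<lambda>j. - y j) = (\<lambda>j. - lft p n e y j)"
  unfolding lft_def by (auto simp: ell_neg)

lemma lft_zero: "lft p n e (\<lambda>j. 0) = (\<lambda>j. 0)"
  unfolding lft_def ell_def by auto

lemma ell_W: "i \<in> {1..n} \<Longrightarrow> ell n (Wvec p i) = real p * wt i"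
  unfolding ell_def Wvec_def
  by (simp add: if_distrib[of "\<lambda>x. x * _"] sum.delta cong: if_cong)

lemma vvec_lft: "p > 0 \<Longrightarrow> i \<in> {1..n} \<Longrightarrow> vvec p n e i = lft p n e (Wvec p i)"
proof -
  assume p: "p > 0" and i: "i \<in> {1..n}"
  have h: "ell n (Wvec p i) = real p * wt i" using i by (rule ell_W)
  show ?thesis unfolding lft_def h using p i by (intro ext) (auto simp: vvec_def Wvec_def wt_def)
qed

lemma sum_uW: "n \<ge> 1 \<Longrightarrow> (\<lambda>j. \<Sum>i=1..n. uvec n \<sigma> i * Wvec p i j) = (\<lambda>j. real p * uvec n \<sigma> j)"
  unfolding Wvec_def
  by (rule ext) (auto simp: if_distrib[of "\<lambda>x. _ * x"] sum.delta uvec_def cong: if_cong)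

lemma lft_scale: "lft p n e (\<lambda>j. c * y j) = (\<lambda>j. c * lft p n e y j)"
  using lft_sum[of "{0::nat}" p n e "\<lambda>_. c" "\<lambda>_. y"] by simp

lemma utilde_lft: "p > 0 \<Longrightarrow> n \<ge> 1 \<Longrightarrow> utilde p n \<sigma> e = lft p n e (uvec n \<sigma>)"
proof -
  assume p: "p > 0" and n1: "n \<ge> 1"
  have "utilde p n \<sigma> e = (\<lambda>j. (1 / real p) * (\<Sum>i=1..n. uvec n \<sigma> i * lft p n e (Wvec p i) j))"
    unfolding utilde_def by (intro ext arg_cong[where f="\<lambda>x. _ * x"] sum.cong) (auto simp: vvec_lft[OF p])
  also have "\<dots> = (\<lambda>j. (1 / real p) * lft p n e (\<lambda>j. \<Sum>i=1..n. uvec n \<sigma> i * Wvec p i j) j)"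
    by (simp add: lft_sum)
  also have "\<dots> = (\<lambda>j. (1 / real p) * (real p * lft p n e (uvec n \<sigma>) j))"
    by (simp only: sum_uW[OF n1] lft_scale)
  also have "\<dots> = lft p n e (uvec n \<sigma>)" using p by auto
  finally show ?thesis .
qed

lemma Np_lft: "(\<forall>j. j \<notin> {1..n} \<longrightarrow> y j = 0) \<Longrightarrow>
   Np q (n+1) (lft p n e y) = Np q n y + \<bar>e / real p * ell n y\<bar> ^ q"
  unfolding Np_def by (simp add: lft_def)

lemma qnorm_lt: "q \<ge> 1 \<Longrightarrow> R > 0 \<Longrightarrow> qnorm q d x < R \<longleftrightarrow> Np q d x < R ^ q"
proof -
  assume q: "q \<ge> 1" and R: "R > 0"
  have "root q (R ^ q) = R" using q R by (intro real_root_power_cancel) auto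
  then have "qnorm q d x < R \<longleftrightarrow> root q (Np q d x) < root q (R ^ q)"
    by (simp add: qnorm_def Np_def)
  also have "\<dots> \<longleftrightarrow> Np q d x < R ^ q" using q by (simp add: real_root_less_iff)
  finally show ?thesis .
qed

lemma qnorm_le: "q \<ge> 1 \<Longrightarrow> qnorm q d x \<le> qnorm q d y \<longleftrightarrow> Np q d x \<le> Np q d y"
  by (simp add: qnorm_def Np_def real_root_le_iff)

lemma Np_neg: "Np q d (\<lambda>j. - x j) = Np q d x"
  by (simp add: Np_def)

lemma Np_nonneg: "Np q d x \<ge> 0"
  by (simp add: Np_def sum_nonneg)

lemma pow_add_le: "(a::real) \<ge> 0 \<Longrightarrow> b \<ge> 0 \<Longrightarrow> q \<ge> 1 \<Longrightarrow> a ^ q + b ^ q \<le> (a + b) ^ q"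
proof (induction q)
  case 0 then show ?case by simp
next
  case (Suc m)
  show ?case
  proof (cases "m = 0")
    case True then show ?thesis by simp
  next
    case False
  have "a ^ Suc m + b ^ Suc m \<le> (a + b) * (a ^ m + b ^ m)"
    using Suc False by (simp add: algebra_simps)
  also have "\<dots> \<le> (a + b) * (a + b) ^ m" using Suc False by (intro mult_left_mono) auto
  finally show ?thesis by simp
qed
qed


lemma sum_split1: fixes f :: "nat \<Rightarrow> 'a::comm_monoid_add" shows "n \<ge> 1 \<Longrightarrow> (\<Sum>i=1..n. f i) = f 1 + (\<Sum>i=2..n. f i)"
  by (simp add: sum.atLeast_Suc_atMost numeral_2_eq_2)

lemma sum_split2: fixes f :: "nat \<Rightarrow> 'a::comm_monoid_add" shows "n \<ge> 1 \<Longrightarrow> (\<Sum>i=1..n+1. f i) = f 1 + (\<Sum>i=2..n. f i) + f (n+1)"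
  using sum_split1[of n f] by simp

lemma sum_shift1: fixes f :: "nat \<Rightarrow> 'a::comm_monoid_add" shows "(\<Sum>i=2..Suc m. f i) = (\<Sum>i=1..m. f (Suc i))"
  by (metis One_nat_def Suc_1 sum.shift_bounds_cl_Suc_ivl)

lemma sum_split_shift: fixes f :: "nat \<Rightarrow> 'a::comm_monoid_add"
  shows "(\<Sum>i=1..Suc m. f i) = f 1 + (\<Sum>i=1..m. f (Suc i))"
proof -
  have "(\<Sum>i=1..Suc m. f i) = f 1 + (\<Sum>i=2..Suc m. f i)" by (rule sum_split1) simp
  also have "\<dots> = f 1 + (\<Sum>i=1..m. f (Suc i))" by (simp only: sum_shift1)
  finally show ?thesis .
qed

lemma Lt_eq: "p > 0 \<Longrightarrow> n \<ge> 1 \<Longrightarrow> Ltilde p n \<sigma> e = lft p n e ` Lplus p n \<sigma>"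
proof -
  assume p: "p > 0" and n1: "n \<ge> 1"
  have key: "(\<lambda>j. \<Sum>i\<in>{1..n+1}. of_int (c i) * (if i \<le> n then vvec p n e i else utilde p n \<sigma> e) j)
     = lft p n e (\<lambda>j. \<Sum>i\<in>{1..n+1}. of_int (c i) * (if i \<le> n then Wvec p i else uvec n \<sigma>) j)" for c :: "nat \<Rightarrow> int"
  proof -
    have "(\<lambda>j. \<Sum>i\<in>{1..n+1}. of_int (c i) * (if i \<le> n then vvec p n e i else utilde p n \<sigma> e) j)
        = (\<lambda>j. \<Sum>i\<in>{1..n+1}. of_int (c i) * lft p n e (if i \<le> n then Wvec p i else uvec n \<sigma>) j)"
      by (intro ext sum.cong) (auto simp: vvec_lft[OF p] utilde_lft[OF p n1])
    also have "\<dots> = lft p n e (\<lambda>j. \<Sum>i\<in>{1..n+1}. of_int (c i) * (if i \<le> n then Wvec p i else uvec n \<sigma>) j)"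
      by (rule lft_sum[symmetric]) simp
    finally show ?thesis .
  qed
  show ?thesis unfolding Ltilde_def Lplus_def zspan_def key by auto
qed

lemma Lp_zero: "n \<ge> 1 \<Longrightarrow> y \<in> Lplus p n \<sigma> \<Longrightarrow> j \<notin> {1..n} \<Longrightarrow> y j = 0"
  unfolding Lplus_def zspan_def
  by (auto intro!: sum.neutral simp: Wvec_def uvec_def)

lemma Np_W: "q \<ge> 1 \<Longrightarrow> k \<in> {1..n} \<Longrightarrow> Np q n (Wvec p k) = real p ^ q"
proof -
  assume q: "q \<ge> 1" and k: "k \<in> {1..n}"
  have "Np q n (Wvec p k) = (\<Sum>i=1..n. if i = k then real p ^ q else 0)"
    unfolding Np_def Wvec_def using q by (intro sum.cong) auto
  also have "\<dots> = real p ^ q" using k by (simp add: sum.delta)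
  finally show ?thesis .
qed

lemma NV: "p > 0 \<Longrightarrow> q \<ge> 1 \<Longrightarrow> k \<in> {1..n} \<Longrightarrow> Np q (n+1) (vvec p n e k) = real p ^ q + \<bar>e * wt k\<bar> ^ q"
proof -
  assume p: "p > 0" and q: "q \<ge> 1" and k: "k \<in> {1..n}"
  have z: "\<forall>j. j \<notin> {1..n} \<longrightarrow> Wvec p k j = 0" using k by (auto simp: Wvec_def)
  have "Np q (n+1) (vvec p n e k) = Np q (n+1) (lft p n e (Wvec p k))" by (simp add: vvec_lft[OF p k])
  also have "\<dots> = Np q n (Wvec p k) + \<bar>e / real p * ell n (Wvec p k)\<bar> ^ q" by (rule Np_lft[OF z])
  finally show ?thesis using p by (simp add: Np_W[OF q k] ell_W[OF k])
qed


theorem lemma4p6: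
  fixes q p n :: nat and \<sigma> :: "nat \<Rightarrow> int" and R \<epsilon> :: real
  assumes q_pos: "q \<ge> 1"
    and p_prime: "prime p" and p_ge: "p \<ge> 7"
    and n_ge: "n \<ge> 2"
    and sigma_vals: "\<forall>i\<in>{1..n-1}. \<sigma> i \<in> {2, 3}"
    and sigma_sum: "(\<Sum>i=1..n-1. \<sigma> i ^ q) = int p ^ q - 1"
    and sigma_mod: "\<forall>k::int. \<not> [k = 0] (mod int p) \<and> \<not> [k = 1] (mod int p) \<and> \<not> [k = -1] (mod int p)
                      \<longrightarrow> modnorm q (real p) (n-1) (\<lambda>i. of_int (k * \<sigma> i))
                          > modnorm q (real p) (n-1) (\<lambda>i. of_int (\<sigma> i))"
    and q_ge2: "q \<ge> 2 \<longrightarrow> 4 * int n - 3 > 2 * int p"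
    and R_gt: "R > real p"
    and R_ball: "Lplus p n \<sigma> \<inter> qball q n R =
                   {(\<lambda>j. 0)} \<union> {Wvec p i | i. i \<in> {1..n}} \<union> {(\<lambda>j. - Wvec p i j) | i. i \<in> {1..n}}
                   \<union> {uvec n \<sigma>, (\<lambda>j. - uvec n \<sigma> j)}"
    and eps_pos: "\<epsilon> > 0"
    and eps_lt: "\<epsilon> < (R - real p) / 2"
    and eps_q: "\<epsilon> ^ q < real p ^ q * (R ^ q - real p ^ q) / (real ((n - 1) * (p - 1) + 1)) ^ q"
  shows "lattice_of_rank (n + 1) n (Ltilde p n \<sigma> \<epsilon>)
       \<and> Ltilde p n \<sigma> \<epsilon> \<inter> qball q (n + 1) R =
           {(\<lambda>j. 0)} \<union> {vvec p n \<epsilon> i | i. i \<in> {1..n}} \<union> {(\<lambda>j. - vvec p n \<epsilon> i j) | i. i \<in> {1..n}}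
           \<union> {utilde p n \<sigma> \<epsilon>, (\<lambda>j. - utilde p n \<sigma> \<epsilon> j)}
       \<and> {x \<in> Ltilde p n \<sigma> \<epsilon>. x \<noteq> (\<lambda>j. 0) \<and>
             (\<forall>y \<in> Ltilde p n \<sigma> \<epsilon>. y \<noteq> (\<lambda>j. 0) \<longrightarrow> qnorm q (n + 1) x \<le> qnorm q (n + 1) y)}
         = {vvec p n \<epsilon> 1, (\<lambda>j. - vvec p n \<epsilon> 1 j)}"
proof -
  have p0: "p > 0" using p_ge by simp
  have n1: "n \<ge> 1" using n_ge by simp
  obtain m where nm: "n = Suc m" using n1 not0_implies_Suc by fastforce
  have m1: "m \<ge> 1" using n_ge nm by simp
  have Rpos: "R > 0" using R_gt by simp
  define U where "U = utilde p n \<sigma> \<epsilon>"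
  have U_lft: "U = lft p n \<epsilon> (uvec n \<sigma>)" unfolding U_def by (rule utilde_lft[OF p0 n1])
  define Ti :: int where "Ti = 1 + 2 * (\<Sum>i=1..n-1. \<sigma> i)"
  define T :: real where "T = real_of_int Ti"
  have Lt: "Ltilde p n \<sigma> \<epsilon> = lft p n \<epsilon> ` Lplus p n \<sigma>" by (rule Lt_eq[OF p0 n1])
  have uz: "\<forall>j. j \<notin> {1..n} \<longrightarrow> uvec n \<sigma> j = 0" using n1 by (auto simp: uvec_def)
  have sig23: "\<sigma> i \<in> {2,3}" if "i \<in> {1..m}" for i
    using sigma_vals nm that by simp
  have sig_lo: "\<sigma> i \<ge> 2" if "i \<in> {1..m}" for i
    using sig23[OF that] by auto
  have sig_hi: "\<sigma> i \<le> 3" if "i \<in> {1..m}" for i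
    using sig23[OF that] by auto
  have sig_abs: "\<bar>real_of_int (\<sigma> i)\<bar> = real_of_int (\<sigma> i)" if "i \<in> {1..m}" for i
    using sig_lo[OF that] by simp
  have ell_u: "ell n (uvec n \<sigma>) = T"
  proof -
    have "ell n (uvec n \<sigma>) = uvec n \<sigma> 1 * wt 1 + (\<Sum>i=1..m. uvec n \<sigma> (Suc i) * wt (Suc i))"
      unfolding ell_def nm by (rule sum_split_shift)
    also have "\<dots> = 1 + (\<Sum>i=1..m. 2 * real_of_int (\<sigma> i))"
      by (intro arg_cong2[where f="(+)"] sum.cong) (auto simp: uvec_def wt_def nm)
    finally show ?thesis unfolding T_def Ti_def nm by (simp add: sum_distrib_left)
  qed
  have Np_u: "Np q n (uvec n \<sigma>) = real p ^ q"
  proof -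
    have "Np q n (uvec n \<sigma>) = \<bar>uvec n \<sigma> 1\<bar> ^ q + (\<Sum>i=1..m. \<bar>uvec n \<sigma> (Suc i)\<bar> ^ q)"
      unfolding Np_def nm by (rule sum_split_shift)
    also have "\<dots> = 1 + (\<Sum>i=1..m. real_of_int (\<sigma> i ^ q))"
      using sig_abs by (intro arg_cong2[where f="(+)"] sum.cong) (auto simp: uvec_def nm)
    also have "\<dots> = 1 + real_of_int (int p ^ q - 1)"
      using sigma_sum nm by (simp only: of_int_sum[symmetric]) simp
    finally show ?thesis by simp
  qed
  have NU: "Np q (n+1) U = real p ^ q + \<bar>\<epsilon> * T / real p\<bar> ^ q"
    unfolding U_lft Np_lft[OF uz] Np_u ell_u by simp
  have sum_lo: "(\<Sum>i=1..m. \<sigma> i) \<ge> 2 * int m"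
    using sum_bounded_below[of "{1..m}" 2 \<sigma>] sig_lo by simp
  have sum_hi: "(\<Sum>i=1..m. \<sigma> i) \<le> 3 * int m"
    using sum_bounded_above[of "{1..m}" \<sigma> 3] sig_hi by simp
  have Ti_pos: "Ti \<ge> 0" using sum_lo unfolding Ti_def nm by simp
  have T_pos: "T \<ge> 0" unfolding T_def using Ti_pos by simp
  define M :: real where "M = real ((n - 1) * (p - 1) + 1)"
  have TM: "T \<le> M"
  proof -
    have "int m * 6 \<le> int m * (int p - 1)" using p_ge by (intro mult_left_mono) auto
    then have "Ti \<le> int m * (int p - 1) + 1" using sum_hi unfolding Ti_def nm by simp
    also have "\<dots> = int (m * (p - 1) + 1)" using p_ge by (simp add: of_nat_diff)
    finally have "real_of_int Ti \<le> real_of_int (int (m * (p - 1) + 1))" by (simp only: of_int_le_iff)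
    then show ?thesis unfolding T_def M_def nm by simp
  qed
  have Tip: "Ti > int p"
  proof (cases "q = 1")
    case True
    then have "(\<Sum>i=1..m. \<sigma> i) = int p - 1" using sigma_sum nm by simp
    then show ?thesis unfolding Ti_def nm using p_ge by simp
  next
    case False
    then have "4 * int n - 3 > 2 * int p" using q_ge2 q_pos by simp
    then show ?thesis using sum_lo unfolding Ti_def nm by simp
  qed
  have Tp: "T > real p"
  proof -
    have "real_of_int Ti > real_of_int (int p)" using Tip by (simp only: of_int_less_iff)
    then show ?thesis unfolding T_def by simp
  qed
  have ineqV: "\<And>k. k \<in> {1..n} \<Longrightarrow> real p ^ q + \<bar>\<epsilon> * wt k\<bar> ^ q < R ^ q"
  proof -
    fix k assume k: "k \<in> {1..n}"
    have "\<bar>\<epsilon> * wt k\<bar> ^ q \<le> (2 * \<epsilon>) ^ q"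
      using eps_pos by (intro power_mono) (auto simp: wt_def)
    also have "real p ^ q + (2 * \<epsilon>) ^ q \<le> (real p + 2 * \<epsilon>) ^ q"
      using eps_pos q_pos by (intro pow_add_le) auto
    moreover have "(real p + 2 * \<epsilon>) ^ q < R ^ q"
      using eps_pos eps_lt q_pos by (intro power_strict_mono) auto
    ultimately show "real p ^ q + \<bar>\<epsilon> * wt k\<bar> ^ q < R ^ q" by linarith
  qed
  have ineqU: "real p ^ q + \<bar>\<epsilon> * T / real p\<bar> ^ q < R ^ q"
  proof -
    have Mpos: "M > 0" unfolding M_def by (simp only: of_nat_0_less_iff)
    have e1: "\<epsilon> ^ q * M ^ q < real p ^ q * (R ^ q - real p ^ q)"
      using eps_q Mpos unfolding M_def[symmetric] by (simp add: pos_less_divide_eq)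
    have "\<bar>\<epsilon> * T / real p\<bar> ^ q = \<epsilon> ^ q * T ^ q / real p ^ q"
      using eps_pos T_pos by (simp add: power_divide power_mult_distrib)
    also have "\<dots> \<le> \<epsilon> ^ q * M ^ q / real p ^ q"
      using T_pos TM eps_pos by (intro divide_right_mono mult_left_mono power_mono) auto
    also have "\<dots> < R ^ q - real p ^ q"
      using e1 p0 by (simp add: pos_divide_less_eq mult.commute)
    finally show ?thesis by simp
  qed
  have gtV: "\<And>k. k \<in> {2..n} \<Longrightarrow> real p ^ q + \<bar>\<epsilon>\<bar> ^ q < real p ^ q + \<bar>\<epsilon> * wt k\<bar> ^ q"
    using eps_pos q_pos by (auto simp: wt_def intro!: power_strict_mono)
  have gtU: "real p ^ q + \<bar>\<epsilon>\<bar> ^ q < real p ^ q + \<bar>\<epsilon> * T / real p\<bar> ^ q"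
  proof -
    have "\<epsilon> < \<epsilon> * T / real p" using Tp eps_pos p0 by (simp add: pos_less_divide_eq)
    then show ?thesis using eps_pos q_pos T_pos by (auto intro!: power_strict_mono)
  qed
  define S' where "S' = {(\<lambda>j. 0)} \<union> {Wvec p i | i. i \<in> {1..n}} \<union> {(\<lambda>j. - Wvec p i j) | i. i \<in> {1..n}}
                   \<union> {uvec n \<sigma>, (\<lambda>j. - uvec n \<sigma> j)}"
  define S where "S = {(\<lambda>j. 0)} \<union> {vvec p n \<epsilon> i | i. i \<in> {1..n}} \<union> {(\<lambda>j. - vvec p n \<epsilon> i j) | i. i \<in> {1..n}}
           \<union> {U, (\<lambda>j. - U j)}"
  have Rb: "Lplus p n \<sigma> \<inter> qball q n R = S'" using R_ball unfolding S'_def .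
  have SS: "S = lft p n \<epsilon> ` S'"
  proof -
    have a: "lft p n \<epsilon> ` {Wvec p i | i. i \<in> {1..n}} = {vvec p n \<epsilon> i | i. i \<in> {1..n}}"
      unfolding setcompr_eq_image image_image
      by (rule image_cong[OF refl]) (simp add: vvec_lft[OF p0])
    have b: "lft p n \<epsilon> ` {(\<lambda>j. - Wvec p i j) | i. i \<in> {1..n}} = {(\<lambda>j. - vvec p n \<epsilon> i j) | i. i \<in> {1..n}}"
      unfolding setcompr_eq_image image_image
      by (rule image_cong[OF refl]) (simp add: vvec_lft[OF p0] lft_neg)
    show ?thesis unfolding S_def S'_def image_Un a b
      by (simp add: lft_zero lft_neg U_lft)
  qed
  have Lz: "\<And>y j. y \<in> Lplus p n \<sigma> \<Longrightarrow> j \<notin> {1..n} \<Longrightarrow> y j = 0"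
    using Lp_zero[OF n1] by blast
  have Ltz: "\<And>x j. x \<in> Ltilde p n \<sigma> \<epsilon> \<Longrightarrow> j \<notin> {1..n+1} \<Longrightarrow> x j = 0"
    using Lz unfolding Lt by (auto simp: lft_def)
  have ball_iff: "\<And>x. x \<in> Ltilde p n \<sigma> \<epsilon> \<Longrightarrow> x \<in> qball q (n+1) R \<longleftrightarrow> Np q (n+1) x < R ^ q"
    using Ltz qnorm_lt[OF q_pos Rpos] unfolding qball_def by blast
  have S'L: "S' \<subseteq> Lplus p n \<sigma>" using Rb by blast
  have SL: "S \<subseteq> Ltilde p n \<sigma> \<epsilon>" unfolding SS Lt using S'L by blast
  have NS: "\<And>x. x \<in> S \<Longrightarrow> x = (\<lambda>j. 0) \<or> (\<exists>k\<in>{1..n}. Np q (n+1) x = real p ^ q + \<bar>\<epsilon> * wt k\<bar> ^ q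
             \<and> (x = vvec p n \<epsilon> k \<or> x = (\<lambda>j. - vvec p n \<epsilon> k j)))
             \<or> Np q (n+1) x = real p ^ q + \<bar>\<epsilon> * T / real p\<bar> ^ q"
    unfolding S_def using NV[OF p0 q_pos] NU by (auto simp: Np_neg)
  have S_ball: "\<And>x. x \<in> S \<Longrightarrow> Np q (n+1) x < R ^ q"
  proof -
    fix x assume "x \<in> S"
    from NS[OF this] show "Np q (n+1) x < R ^ q"
      using ineqV ineqU Rpos q_pos by (auto simp: Np_def power_0_left)
  qed
  have part2: "Ltilde p n \<sigma> \<epsilon> \<inter> qball q (n + 1) R = S"
  proof
    show "S \<subseteq> Ltilde p n \<sigma> \<epsilon> \<inter> qball q (n + 1) R"
      using SL S_ball ball_iff by blast
  next
    show "Ltilde p n \<sigma> \<epsilon> \<inter> qball q (n + 1) R \<subseteq> S"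
    proof
      fix x assume x: "x \<in> Ltilde p n \<sigma> \<epsilon> \<inter> qball q (n + 1) R"
      then obtain y where y: "y \<in> Lplus p n \<sigma>" and xy: "x = lft p n \<epsilon> y" unfolding Lt by blast
      have yz: "\<forall>j. j \<notin> {1..n} \<longrightarrow> y j = 0" using Lz[OF y] by blast
      have "Np q (n+1) x < R ^ q" using x ball_iff by blast
      moreover have "\<bar>\<epsilon> / real p * ell n y\<bar> ^ q \<ge> 0" by simp
      ultimately have "Np q n y < R ^ q" unfolding xy Np_lft[OF yz] by linarith
      then have "y \<in> qball q n R" using yz qnorm_lt[OF q_pos Rpos] unfolding qball_def by blast
      then have "y \<in> S'" using y Rb by blast
      then show "x \<in> S" unfolding SS xy by blast
    qed
  qed
  define v1 where "v1 = vvec p n \<epsilon> 1"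
  have one: "(1::nat) \<in> {1..n}" using n1 by simp
  have Nv1: "Np q (n+1) v1 = real p ^ q + \<bar>\<epsilon>\<bar> ^ q"
    unfolding v1_def NV[OF p0 q_pos one] by (simp add: wt_def)
  have Nv1m: "Np q (n+1) (\<lambda>j. - v1 j) = real p ^ q + \<bar>\<epsilon>\<bar> ^ q" using Nv1 by (simp add: Np_neg)
  have v1S: "v1 \<in> S" "(\<lambda>j. - v1 j) \<in> S" unfolding S_def v1_def using one by blast+
  have v1nz: "v1 \<noteq> (\<lambda>j. 0)" "(\<lambda>j. - v1 j) \<noteq> (\<lambda>j. 0)"
  proof -
    have "v1 1 = real p" unfolding v1_def vvec_def by simp
    then show "v1 \<noteq> (\<lambda>j. 0)" "(\<lambda>j. - v1 j) \<noteq> (\<lambda>j. 0)" using p0 by (metis neg_equal_0_iff_equal of_nat_0_less_iff less_irrefl)+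
  qed
  have claimA: "\<And>x. x \<in> S \<Longrightarrow> x \<noteq> (\<lambda>j. 0) \<Longrightarrow> Np q (n+1) x \<le> real p ^ q + \<bar>\<epsilon>\<bar> ^ q \<Longrightarrow> x = v1 \<or> x = (\<lambda>j. - v1 j)"
  proof -
    fix x assume xS: "x \<in> S" and nz: "x \<noteq> (\<lambda>j. 0)" and le: "Np q (n+1) x \<le> real p ^ q + \<bar>\<epsilon>\<bar> ^ q"
    from NS[OF xS] nz consider (k) k where "k \<in> {1..n}" "Np q (n+1) x = real p ^ q + \<bar>\<epsilon> * wt k\<bar> ^ q"
        "x = vvec p n \<epsilon> k \<or> x = (\<lambda>j. - vvec p n \<epsilon> k j)"
      | (u) "Np q (n+1) x = real p ^ q + \<bar>\<epsilon> * T / real p\<bar> ^ q" by blast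
    then show "x = v1 \<or> x = (\<lambda>j. - v1 j)"
    proof cases
      case k
      show ?thesis
      proof (cases "k = 1")
        case True then show ?thesis using k unfolding v1_def by blast
      next
        case False
        then have "k \<in> {2..n}" using k by auto
        then show ?thesis using gtV k le by fastforce
      qed
    next
      case u then show ?thesis using gtU le by linarith
    qed
  qed
  have claimB: "\<And>x. x \<in> S \<Longrightarrow> x \<noteq> (\<lambda>j. 0) \<Longrightarrow> Np q (n+1) x \<ge> real p ^ q + \<bar>\<epsilon>\<bar> ^ q"
  proof -
    fix x assume xS: "x \<in> S" and nz: "x \<noteq> (\<lambda>j. 0)"
    from NS[OF xS] nz consider (k) k where "k \<in> {1..n}" "Np q (n+1) x = real p ^ q + \<bar>\<epsilon> * wt k\<bar> ^ q"
      | (u) "Np q (n+1) x = real p ^ q + \<bar>\<epsilon> * T / real p\<bar> ^ q" by blast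
    then show "Np q (n+1) x \<ge> real p ^ q + \<bar>\<epsilon>\<bar> ^ q"
    proof cases
      case k
      show ?thesis
      proof (cases "k = 1")
        case True then show ?thesis using k by (simp add: wt_def)
      next
        case False
        then have "k \<in> {2..n}" using k by auto
        then show ?thesis using gtV k by fastforce
      qed
    next
      case u then show ?thesis using gtU by linarith
    qed
  qed
  have v1b: "Np q (n+1) v1 < R ^ q" using S_ball v1S by blast
  have part3: "{x \<in> Ltilde p n \<sigma> \<epsilon>. x \<noteq> (\<lambda>j. 0) \<and>
             (\<forall>y \<in> Ltilde p n \<sigma> \<epsilon>. y \<noteq> (\<lambda>j. 0) \<longrightarrow> qnorm q (n + 1) x \<le> qnorm q (n + 1) y)}
         = {v1, (\<lambda>j. - v1 j)}"
  proof
    show "{x \<in> Ltilde p n \<sigma> \<epsilon>. x \<noteq> (\<lambda>j. 0) \<and>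
             (\<forall>y \<in> Ltilde p n \<sigma> \<epsilon>. y \<noteq> (\<lambda>j. 0) \<longrightarrow> qnorm q (n + 1) x \<le> qnorm q (n + 1) y)}
         \<subseteq> {v1, (\<lambda>j. - v1 j)}"
    proof
      fix x assume "x \<in> {x \<in> Ltilde p n \<sigma> \<epsilon>. x \<noteq> (\<lambda>j. 0) \<and>
             (\<forall>y \<in> Ltilde p n \<sigma> \<epsilon>. y \<noteq> (\<lambda>j. 0) \<longrightarrow> qnorm q (n + 1) x \<le> qnorm q (n + 1) y)}"
      then have xL: "x \<in> Ltilde p n \<sigma> \<epsilon>" and nz: "x \<noteq> (\<lambda>j. 0)"
        and mn: "\<forall>y \<in> Ltilde p n \<sigma> \<epsilon>. y \<noteq> (\<lambda>j. 0) \<longrightarrow> qnorm q (n + 1) x \<le> qnorm q (n + 1) y" by auto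
      have "qnorm q (n+1) x \<le> qnorm q (n+1) v1" using mn SL v1S v1nz by blast
      then have le: "Np q (n+1) x \<le> Np q (n+1) v1" using qnorm_le[OF q_pos] by blast
      then have "x \<in> qball q (n+1) R" using ball_iff[OF xL] v1b by linarith
      then have "x \<in> S" using part2 xL by blast
      then show "x \<in> {v1, (\<lambda>j. - v1 j)}" using claimA nz le Nv1 by auto
    qed
  next
    show "{v1, (\<lambda>j. - v1 j)} \<subseteq> {x \<in> Ltilde p n \<sigma> \<epsilon>. x \<noteq> (\<lambda>j. 0) \<and>
             (\<forall>y \<in> Ltilde p n \<sigma> \<epsilon>. y \<noteq> (\<lambda>j. 0) \<longrightarrow> qnorm q (n + 1) x \<le> qnorm q (n + 1) y)}"
    proof
      fix x assume x: "x \<in> {v1, (\<lambda>j. - v1 j)}"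
      then have xS: "x \<in> S" and nz: "x \<noteq> (\<lambda>j. 0)" and Nx: "Np q (n+1) x = real p ^ q + \<bar>\<epsilon>\<bar> ^ q"
        using v1S v1nz Nv1 Nv1m by auto
      have "qnorm q (n + 1) x \<le> qnorm q (n + 1) y" if yL: "y \<in> Ltilde p n \<sigma> \<epsilon>" and ynz: "y \<noteq> (\<lambda>j. 0)" for y
      proof -
        have "Np q (n+1) x \<le> Np q (n+1) y"
        proof (cases "Np q (n+1) y < R ^ q")
          case True
          then have "y \<in> S" using ball_iff[OF yL] part2 yL by blast
          then show ?thesis using claimB ynz Nx by auto
        next
          case False then show ?thesis using Nx Nv1 v1b by linarith
        qed
        then show ?thesis using qnorm_le[OF q_pos] by blast
      qed
      then show "x \<in> {x \<in> Ltilde p n \<sigma> \<epsilon>. x \<noteq> (\<lambda>j. 0) \<and>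
             (\<forall>y \<in> Ltilde p n \<sigma> \<epsilon>. y \<noteq> (\<lambda>j. 0) \<longrightarrow> qnorm q (n + 1) x \<le> qnorm q (n + 1) y)}"
        using xS SL nz by blast
    qed
  qed
  define b where "b = (\<lambda>i. if i = 1 then U else vvec p n \<epsilon> i)"
  have Uval: "\<And>j. j \<noteq> n+1 \<Longrightarrow> U j = uvec n \<sigma> j" unfolding U_lft lft_def by simp
  have vv: "\<And>i j. j \<noteq> n+1 \<Longrightarrow> vvec p n \<epsilon> i j = (if j = i then real p else 0)"
    unfolding vvec_def by simp
  have E1: "(\<Sum>i\<in>{1..n+1}. a i * (if i \<le> n then vvec p n \<epsilon> i else utilde p n \<sigma> \<epsilon>) j)
      = a 1 * vvec p n \<epsilon> 1 j + (\<Sum>i=2..n. a i * vvec p n \<epsilon> i j) + a (n+1) * U j" for a j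
  proof -
    have "(\<Sum>i=2..n. a i * (if i \<le> n then vvec p n \<epsilon> i else utilde p n \<sigma> \<epsilon>) j) = (\<Sum>i=2..n. a i * vvec p n \<epsilon> i j)"
      by (rule sum.cong) auto
    moreover have "(\<Sum>i\<in>{1..n+1}. a i * (if i \<le> n then vvec p n \<epsilon> i else utilde p n \<sigma> \<epsilon>) j)
      = a 1 * (if 1 \<le> n then vvec p n \<epsilon> 1 else utilde p n \<sigma> \<epsilon>) j
        + (\<Sum>i=2..n. a i * (if i \<le> n then vvec p n \<epsilon> i else utilde p n \<sigma> \<epsilon>) j)
        + a (n+1) * (if n+1 \<le> n then vvec p n \<epsilon> (n+1) else utilde p n \<sigma> \<epsilon>) j"
      by (rule sum_split2[OF n1])
    ultimately show ?thesis using n1 by (simp add: U_def)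
  qed
  have E2: "(\<Sum>i=1..n. a i * b i j) = a 1 * U j + (\<Sum>i=2..n. a i * vvec p n \<epsilon> i j)" for a j
  proof -
    have "(\<Sum>i=2..n. a i * b i j) = (\<Sum>i=2..n. a i * vvec p n \<epsilon> i j)"
      by (rule sum.cong) (auto simp: b_def)
    moreover have "(\<Sum>i=1..n. a i * b i j) = a 1 * b 1 j + (\<Sum>i=2..n. a i * b i j)"
      by (rule sum_split1[OF n1])
    ultimately show ?thesis by (simp add: b_def)
  qed
  have vid: "vvec p n \<epsilon> 1 j = real p * U j - (\<Sum>i=2..n. real_of_int (\<sigma> (i - 1)) * vvec p n \<epsilon> i j)" for j
  proof -
    have "(\<Sum>i=2..n. uvec n \<sigma> i * vvec p n \<epsilon> i j) = (\<Sum>i=2..n. real_of_int (\<sigma> (i - 1)) * vvec p n \<epsilon> i j)"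
      by (rule sum.cong) (auto simp: uvec_def)
    moreover have "(\<Sum>i=1..n. uvec n \<sigma> i * vvec p n \<epsilon> i j) = uvec n \<sigma> 1 * vvec p n \<epsilon> 1 j + (\<Sum>i=2..n. uvec n \<sigma> i * vvec p n \<epsilon> i j)"
      by (rule sum_split1[OF n1])
    ultimately have "real p * U j = vvec p n \<epsilon> 1 j + (\<Sum>i=2..n. real_of_int (\<sigma> (i - 1)) * vvec p n \<epsilon> i j)"
      using p0 unfolding U_def utilde_def by (simp add: uvec_def)
    then show ?thesis by simp
  qed
  have part1: "lattice_of_rank (n + 1) n (Ltilde p n \<sigma> \<epsilon>)"
    unfolding lattice_of_rank_def
  proof (intro exI[of _ b] conjI)
    show "\<forall>i\<in>{1..n}. \<forall>j. j \<notin> {1..n + 1} \<longrightarrow> b i j = 0"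
      using uz by (auto simp: b_def Uval vvec_def)
    show "\<forall>c. (\<forall>j. (\<Sum>i = 1..n. c i * b i j) = 0) \<longrightarrow> (\<forall>i\<in>{1..n}. c i = 0)"
    proof (intro allI impI)
      fix c assume h: "\<forall>j. (\<Sum>i = 1..n. c i * b i j) = 0"
      have "(\<Sum>i=2..n. c i * vvec p n \<epsilon> i 1) = 0" by (rule sum.neutral) (auto simp: vv)
      moreover have "U 1 = 1" using n1 by (simp add: Uval uvec_def)
      ultimately have c1: "c 1 = 0" using h[rule_format, of 1] unfolding E2 by simp
      show "\<forall>i\<in>{1..n}. c i = 0"
      proof
        fix k assume k: "k \<in> {1..n}"
        show "c k = 0"
        proof (cases "k = 1")
          case True then show ?thesis using c1 by simp
        next
          case False
          then have k2: "k \<in> {2..n}" using k by auto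
          have "(\<Sum>i=2..n. c i * vvec p n \<epsilon> i k) = (\<Sum>i=2..n. if i = k then c k * real p else 0)"
            using k2 by (intro sum.cong) (auto simp: vv)
          also have "\<dots> = c k * real p" using k2 by (simp add: sum.delta)
          finally have "c k * real p = 0" using h[rule_format, of k] c1 unfolding E2 by simp
          then show ?thesis using p0 by simp
        qed
      qed
    qed
    show "Ltilde p n \<sigma> \<epsilon> = zspan {1..n} b"
    proof
      show "Ltilde p n \<sigma> \<epsilon> \<subseteq> zspan {1..n} b"
      proof
        fix x assume "x \<in> Ltilde p n \<sigma> \<epsilon>"
        then obtain c :: "nat \<Rightarrow> int" where xc: "x = (\<lambda>j. \<Sum>i\<in>{1..n+1}. of_int (c i) * (if i \<le> n then vvec p n \<epsilon> i else utilde p n \<sigma> \<epsilon>) j)"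
          unfolding Ltilde_def zspan_def by blast
        define d :: "nat \<Rightarrow> int" where "d = (\<lambda>i. if i = 1 then int p * c 1 + c (n+1) else c i - c 1 * \<sigma> (i - 1))"
        have "x = (\<lambda>j. \<Sum>i\<in>{1..n}. of_int (d i) * b i j)"
        proof
          fix j
          have s2: "(\<Sum>i=2..n. of_int (d i) * vvec p n \<epsilon> i j) = (\<Sum>i=2..n. of_int (c i) * vvec p n \<epsilon> i j)
                  - of_int (c 1) * (\<Sum>i=2..n. real_of_int (\<sigma> (i - 1)) * vvec p n \<epsilon> i j)"
            by (simp add: sum_distrib_left d_def algebra_simps sum_subtractf)
          show "x j = (\<Sum>i\<in>{1..n}. of_int (d i) * b i j)"
            unfolding xc E1 E2 s2 vid by (simp add: d_def algebra_simps)
        qed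
        then show "x \<in> zspan {1..n} b" unfolding zspan_def by blast
      qed
      show "zspan {1..n} b \<subseteq> Ltilde p n \<sigma> \<epsilon>"
      proof
        fix x assume "x \<in> zspan {1..n} b"
        then obtain c :: "nat \<Rightarrow> int" where xc: "x = (\<lambda>j. \<Sum>i\<in>{1..n}. of_int (c i) * b i j)"
          unfolding zspan_def by blast
        define d :: "nat \<Rightarrow> int" where "d = (\<lambda>i. if i = 1 then 0 else if i = n+1 then c 1 else c i)"
        have "x = (\<lambda>j. \<Sum>i\<in>{1..n+1}. of_int (d i) * (if i \<le> n then vvec p n \<epsilon> i else utilde p n \<sigma> \<epsilon>) j)"
        proof
          fix j
          have s2: "(\<Sum>i=2..n. of_int (d i) * vvec p n \<epsilon> i j) = (\<Sum>i=2..n. of_int (c i) * vvec p n \<epsilon> i j)"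
            by (rule sum.cong) (auto simp: d_def)
          show "x j = (\<Sum>i\<in>{1..n+1}. of_int (d i) * (if i \<le> n then vvec p n \<epsilon> i else utilde p n \<sigma> \<epsilon>) j)"
            unfolding xc E1 E2 s2 using n1 by (simp add: d_def)
        qed
        then show "x \<in> Ltilde p n \<sigma> \<epsilon>" unfolding Ltilde_def zspan_def by blast
      qed
    qed
  qed
  show ?thesis using part1 part2 part3 unfolding S_def U_def v1_def by blast
qed
end
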